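(* Let $\mathcal S$ be the toy stabilizer group of a non-maximal information state on $n$ elementary systems, and let parties $A$ and $B$ hold $k$ and $n-k$ of these elementary systems respectively. Let $\mathcal S_A$ (resp. $\mathcal S_B$) be the subgroup of elements of $\mathcal S$ acting as the identity on every elementary system of $B$ (resp. of $A$), and $\mathcal S_A\cdot\mathcal S_B$ the group they generate. If $\mathcal S = \mathcal S_A\cdot\mathcal S_B$, then the state is not entangled.
   Context: Toy Pauli matrices $\mathcal{X} = \mathrm{diag}(1,-1,1,-1)$, $\mathcal{Y} = \mathrm{diag}(1,-1,-1,1)$, $\mathcal{Z} = \mathrm{diag}(1,1,-1,-1)$; toy Pauli group $G_n = \{\alpha\,p_1\otimes\cdots\otimes p_n: p_i\in\{\mathbb 1_4,\mathcal X,\mathcal Y,\mathcal Z\},\alpha=\pm1\}$. Elements of $G_n$ "commute" if their images under the homomorphism $\mathcal X_k\mapsto X_k$, $\mathcal Z_k\mapsto Z_k$, $-\mathbb 1\mapsto -\mathbb 1$ into the $n$-qubit Pauli group commute. A toy stabilizer group is a subgroup of $G_n$ of pairwise "commuting" elements not containing $-\mathbb 1$; its epistemic state is the set of ontic states $e_{i_1}\otimes\cdots\otimes e_{i_n}$ fixed by all its elements; it is non-maximal information (mixed) if it has fewer than $n$ independent generators. A product state between $A$ and $B$ is an epistemic state $E_A\times E_B = \{(a,b): a\in E_A, b\in E_B\}$ with $E_A, E_B$ valid epistemic states on $A$ and $B$. The mixture of epistemic states with disjoint ontic bases whose union is a valid epistemic state is the state whose ontic basis is that union. A mixed state is entangled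 if it cannot be written as a mixture of product states. *)

theory Defs
  imports Main
begin

datatype pauli = PI | PX | PY | PZ

text \<open>Diagonal entries (indices 0..3) of the toy Pauli matrices
  1 = diag(1,1,1,1), X = diag(1,-1,1,-1), Y = diag(1,-1,-1,1), Z = diag(1,1,-1,-1).\<close>
fun pdiag :: "pauli \<Rightarrow> nat \<Rightarrow> int" where
  "pdiag PI i = 1"
| "pdiag PX i = (if i = 0 \<or> i = 2 then 1 else -1)"
| "pdiag PY i = (if i = 0 \<or> i = 3 then 1 else -1)"
| "pdiag PZ i = (if i = 0 \<or> i = 1 then 1 else -1)"

text \<open>Product of toy Pauli matrices (they are diagonal, so this is exact, no phases).\<close>
fun pmult :: "pauli \<Rightarrow> pauli \<Rightarrow> pauli" where
  "pmult PI q = q"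
| "pmult PX PI = PX" | "pmult PX PX = PI" | "pmult PX PY = PZ" | "pmult PX PZ = PY"
| "pmult PY PI = PY" | "pmult PY PX = PZ" | "pmult PY PY = PI" | "pmult PY PZ = PX"
| "pmult PZ PI = PZ" | "pmult PZ PX = PY" | "pmult PZ PY = PX" | "pmult PZ PZ = PI"

text \<open>An element \<alpha> p_1 \<otimes> ... \<otimes> p_n of G_n is represented as (\<alpha>, [p_1,...,p_n]).\<close>
type_synonym toy = "int \<times> pauli list"

definition toyG :: "nat \<Rightarrow> toy set" where
  "toyG n = {(a, ps). (a = 1 \<or> a = -1) \<and> length ps = n}"

definition toy_one :: "nat \<Rightarrow> toy" where
  "toy_one n = (1, replicate n PI)"

definition toy_minus_one :: "nat \<Rightarrow> toy" where
  "toy_minus_one n = (-1, replicate n PI)"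

definition toy_mult :: "toy \<Rightarrow> toy \<Rightarrow> toy" where
  "toy_mult g h = (fst g * fst h, map2 pmult (snd g) (snd h))"

text \<open>Under X \<mapsto> X, Z \<mapsto> Z (hence Y = XZ \<mapsto> XZ), two single-site images anticommute
  iff both are non-identity and different; Pauli strings commute iff the number of
  anticommuting sites is even.\<close>
definition panticomm :: "pauli \<Rightarrow> pauli \<Rightarrow> bool" where
  "panticomm p q \<longleftrightarrow> p \<noteq> PI \<and> q \<noteq> PI \<and> p \<noteq> q"

definition toy_commute :: "toy \<Rightarrow> toy \<Rightarrow> bool" where
  "toy_commute g h \<longleftrightarrow>
     even (card {j. j < length (snd g) \<and> panticomm (snd g ! j) (snd h ! j)})"

inductive_set toy_gen :: "nat \<Rightarrow> toy set \<Rightarrow> toy set" for n gs where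
  one: "toy_one n \<in> toy_gen n gs"
| step: "g \<in> gs \<Longrightarrow> h \<in> toy_gen n gs \<Longrightarrow> toy_mult g h \<in> toy_gen n gs"

definition toy_subgroup :: "nat \<Rightarrow> toy set \<Rightarrow> bool" where
  "toy_subgroup n S \<longleftrightarrow> S \<subseteq> toyG n \<and> toy_one n \<in> S \<and>
     (\<forall>g\<in>S. \<forall>h\<in>S. toy_mult g h \<in> S)"

definition toy_stabilizer :: "nat \<Rightarrow> toy set \<Rightarrow> bool" where
  "toy_stabilizer n S \<longleftrightarrow> toy_subgroup n S \<and>
     (\<forall>g\<in>S. \<forall>h\<in>S. toy_commute g h) \<and> toy_minus_one n \<notin> S"

text \<open>Ontic state e_{i_1} \<otimes> ... \<otimes> e_{i_n} is represented by [i_1,...,i_n] (indices 0..3).\<close>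
definition ontic :: "nat \<Rightarrow> nat list set" where
  "ontic n = {is. length is = n \<and> (\<forall>i\<in>set is. i < 4)}"

text \<open>Diagonal entry of the matrix g at the ontic state is; g fixes is iff it equals 1.\<close>
definition toy_act :: "toy \<Rightarrow> nat list \<Rightarrow> int" where
  "toy_act g is = fst g * prod_list (map2 pdiag (snd g) is)"

definition epistemic :: "nat \<Rightarrow> toy set \<Rightarrow> nat list set" where
  "epistemic n S = {is \<in> ontic n. \<forall>g\<in>S. toy_act g is = 1}"

definition valid_epistemic :: "nat \<Rightarrow> nat list set \<Rightarrow> bool" where
  "valid_epistemic n E \<longleftrightarrow> (\<exists>S. toy_stabilizer n S \<and> E = epistemic n S)"

text \<open>Non-maximal information: S has fewer than n independent generators, i.e. it is
  generated by fewer than n of its elements.\<close>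
definition non_maximal :: "nat \<Rightarrow> toy set \<Rightarrow> bool" where
  "non_maximal n S \<longleftrightarrow> (\<exists>gs. gs \<subseteq> S \<and> finite gs \<and> card gs < n \<and> toy_gen n gs = S)"

definition product_state :: "nat \<Rightarrow> nat \<Rightarrow> nat list set \<Rightarrow> bool" where
  "product_state k n E \<longleftrightarrow> (\<exists>EA EB. valid_epistemic k EA \<and> valid_epistemic (n - k) EB \<and>
      E = {a @ b | a b. a \<in> EA \<and> b \<in> EB})"

definition mixture_of_products :: "nat \<Rightarrow> nat \<Rightarrow> nat list set \<Rightarrow> bool" where
  "mixture_of_products k n E \<longleftrightarrow> (\<exists>F. finite F \<and> F \<noteq> {} \<and>
      (\<forall>P\<in>F. product_state k n P) \<and>
      (\<forall>P\<in>F. \<forall>Q\<in>F. P \<noteq> Q \<longrightarrow> P \<inter> Q = {}) \<and> \<Union>F = E)"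

definition entangled :: "nat \<Rightarrow> nat \<Rightarrow> nat list set \<Rightarrow> bool" where
  "entangled k n E \<longleftrightarrow> \<not> mixture_of_products k n E"

definition sub_A :: "nat \<Rightarrow> nat \<Rightarrow> toy set \<Rightarrow> toy set" where
  "sub_A k n S = {g \<in> S. \<forall>j. k \<le> j \<and> j < n \<longrightarrow> snd g ! j = PI}"

definition sub_B :: "nat \<Rightarrow> toy set \<Rightarrow> toy set" where
  "sub_B k S = {g \<in> S. \<forall>j < k. snd g ! j = PI}"

end

theory Submission
  imports Defs
begin

lemma pdiag_mult: "i < 4 \<Longrightarrow> pdiag (pmult p q) i = pdiag p i * pdiag q i"
  by (cases p; cases q) (auto simp: less_Suc_eq numeral_eq_Suc)

lemma prod_mult:
  "length ps = length os \<Longrightarrow> length qs = length os \<Longrightarrow> (\<forall>i\<in>set os. i < 4) \<Longrightarrow>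
   prod_list (map2 pdiag (map2 pmult ps qs) os) =
   prod_list (map2 pdiag ps os) * prod_list (map2 pdiag qs os)"
proof (induction os arbitrary: ps qs)
  case Nil then show ?case by simp
next
  case (Cons i os)
  then obtain p ps' q qs' where "ps = p # ps'" "qs = q # qs'"
    by (metis length_Suc_conv)
  with Cons show ?case by (simp add: pdiag_mult)
qed

lemma prod_PI: "(\<forall>p\<in>set ps. p = PI) \<Longrightarrow> prod_list (map2 pdiag ps os) = 1"
proof (induction ps arbitrary: os)
  case Nil then show ?case by simp
next
  case (Cons p ps) then show ?case by (cases os) auto
qed

lemma prod_split:
  "length ps = length a + length b \<Longrightarrow>
   prod_list (map2 pdiag ps (a @ b)) =
   prod_list (map2 pdiag (take (length a) ps) a) * prod_list (map2 pdiag (drop (length a) ps) b)"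
proof -
  assume l: "length ps = length a + length b"
  have "ps = take (length a) ps @ drop (length a) ps" by simp
  then have "zip ps (a @ b) = zip (take (length a) ps) a @ zip (drop (length a) ps) b"
    using l by (metis zip_append append_take_drop_id length_take min.absorb2 le_add1)
  then show ?thesis by simp
qed

theorem mainTheorem8:
  fixes n k :: nat and S :: "toy set"
  assumes "toy_stabilizer n S"
    and "non_maximal n S"
    and "k \<le> n"
    and "S = toy_gen n (sub_A k n S \<union> sub_B k S)"
  shows "\<not> entangled k n (epistemic n S)"
proof -
  note st = assms(1) and kn = assms(3) and gen = assms(4)
  have SG: "S \<subseteq> toyG n" and one: "toy_one n \<in> S" and cl: "\<forall>g\<in>S. \<forall>h\<in>S. toy_mult g h \<in> S"
    and com: "\<forall>g\<in>S. \<forall>h\<in>S. toy_commute g h" and nm: "toy_minus_one n \<notin> S"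
    using st unfolding toy_stabilizer_def toy_subgroup_def by auto
  have len: "length (snd g) = n" "fst g = 1 \<or> fst g = -1" if "g \<in> S" for g
    using SG that unfolding toyG_def by auto
  define SA where "SA = (\<lambda>g. (fst g, take k (snd g))) ` sub_A k n S"
  define SB where "SB = (\<lambda>g. (fst g, drop k (snd g))) ` sub_B k S"
  have dropA: "\<forall>p\<in>set (drop k (snd g)). p = PI" if "g \<in> sub_A k n S" for g
  proof -
    have "g \<in> S" "\<forall>j. k \<le> j \<and> j < n \<longrightarrow> snd g ! j = PI" using that unfolding sub_A_def by auto
    then show ?thesis using len kn by (auto simp: set_conv_nth)
  qed
  have takeB: "\<forall>p\<in>set (take k (snd g)). p = PI" if "g \<in> sub_B k S" for g
  proof -
    have "g \<in> S" "\<forall>j<k. snd g ! j = PI" using that unfolding sub_B_def by auto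
    then show ?thesis using len kn by (auto simp: set_conv_nth)
  qed
  have sA: "g \<in> S" if "g \<in> sub_A k n S" for g using that unfolding sub_A_def by auto
  have sB: "g \<in> S" if "g \<in> sub_B k S" for g using that unfolding sub_B_def by auto
  have sA_iff: "g \<in> sub_A k n S \<longleftrightarrow> g \<in> S \<and> (\<forall>p\<in>set (drop k (snd g)). p = PI)" for g
  proof
    assume "g \<in> S \<and> (\<forall>p\<in>set (drop k (snd g)). p = PI)"
    then have gS: "g \<in> S" and P: "\<forall>p\<in>set (drop k (snd g)). p = PI" by auto
    have "snd g ! j = PI" if "k \<le> j" "j < n" for j
    proof -
      have "drop k (snd g) ! (j - k) = snd g ! j" using that len[OF gS] by simp
      moreover have "j - k < length (drop k (snd g))" using that len[OF gS] by simp
      ultimately show ?thesis using P nth_mem by metis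
    qed
    then show "g \<in> sub_A k n S" unfolding sub_A_def using gS by auto
  qed (use dropA sA in auto)
  have sB_iff: "g \<in> sub_B k S \<longleftrightarrow> g \<in> S \<and> (\<forall>p\<in>set (take k (snd g)). p = PI)" for g
  proof
    assume "g \<in> S \<and> (\<forall>p\<in>set (take k (snd g)). p = PI)"
    then have gS: "g \<in> S" and P: "\<forall>p\<in>set (take k (snd g)). p = PI" by auto
    have "snd g ! j = PI" if "j < k" for j
    proof -
      have "take k (snd g) ! j = snd g ! j" using that len[OF gS] by simp
      moreover have "j < length (take k (snd g))" using that len[OF gS] kn by simp
      ultimately show ?thesis using P nth_mem by metis
    qed
    then show "g \<in> sub_B k S" unfolding sub_B_def using gS by auto
  qed (use takeB sB in auto)
  have pPI: "pmult PI PI = PI" by simp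
  have allPI_map2: "\<forall>p\<in>set (map2 pmult xs ys). p = PI"
    if "\<forall>p\<in>set xs. p = PI" "\<forall>p\<in>set ys. p = PI" for xs ys
    using that by (auto dest!: set_zip_leftD set_zip_rightD elim!: in_set_zipE)
  have mult_len: "length (snd (toy_mult g h)) = n" if "g \<in> S" "h \<in> S" for g h
    using len[OF that(1)] len[OF that(2)] by (simp add: toy_mult_def)
  have stA: "toy_stabilizer k SA"
    unfolding toy_stabilizer_def toy_subgroup_def
  proof (intro conjI ballI)
    show "SA \<subseteq> toyG k"
    proof
      fix x assume "x \<in> SA"
      then obtain g where "g \<in> S" "x = (fst g, take k (snd g))" unfolding SA_def using sA by blast
      then show "x \<in> toyG k" using len[of g] kn unfolding toyG_def by auto
    qed
    have "toy_one n \<in> sub_A k n S" using one unfolding sub_A_def toy_one_def by auto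
    then have "(fst (toy_one n), take k (snd (toy_one n))) \<in> SA" unfolding SA_def by blast
    then show "toy_one k \<in> SA" using kn by (simp add: toy_one_def)
  next
    fix g' h' assume "g' \<in> SA" "h' \<in> SA"
    then obtain g h where g: "g \<in> sub_A k n S" "g' = (fst g, take k (snd g))"
      and h: "h \<in> sub_A k n S" "h' = (fst h, take k (snd h))" unfolding SA_def by blast
    have gS: "g \<in> S" and hS: "h \<in> S" using g h sA by auto
    have "toy_mult g h \<in> S" using cl gS hS by blast
    moreover have "\<forall>p\<in>set (drop k (snd (toy_mult g h))). p = PI"
      using allPI_map2[OF dropA[OF g(1)] dropA[OF h(1)]] by (simp add: toy_mult_def drop_map drop_zip)
    ultimately have "toy_mult g h \<in> sub_A k n S" using sA_iff by blast
    then have "(fst (toy_mult g h), take k (snd (toy_mult g h))) \<in> SA" unfolding SA_def by blast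
    then show "toy_mult g' h' \<in> SA" using g h by (simp add: toy_mult_def take_map take_zip)
  next
    fix g' h' assume "g' \<in> SA" "h' \<in> SA"
    then obtain g h where g: "g \<in> sub_A k n S" "g' = (fst g, take k (snd g))"
      and h: "h \<in> sub_A k n S" "h' = (fst h, take k (snd h))" unfolding SA_def by blast
    have gS: "g \<in> S" and hS: "h \<in> S" using g h sA by auto
    have gP: "snd g ! j = PI" if "k \<le> j" "j < n" for j using g(1) that unfolding sub_A_def by auto
    have "{j. j < length (snd g') \<and> panticomm (snd g' ! j) (snd h' ! j)}
        = {j. j < length (snd g) \<and> panticomm (snd g ! j) (snd h ! j)}"
    proof (intro equalityI subsetI)
      fix j assume "j \<in> {j. j < length (snd g') \<and> panticomm (snd g' ! j) (snd h' ! j)}"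
      then show "j \<in> {j. j < length (snd g) \<and> panticomm (snd g ! j) (snd h ! j)}"
        using len[OF gS] len[OF hS] kn g h by auto
    next
      fix j assume j: "j \<in> {j. j < length (snd g) \<and> panticomm (snd g ! j) (snd h ! j)}"
      have "j < k"
      proof (rule ccontr)
        assume "\<not> j < k"
        then have "snd g ! j = PI" using gP j len[OF gS] by simp
        then show False using j by (simp add: panticomm_def)
      qed
      then show "j \<in> {j. j < length (snd g') \<and> panticomm (snd g' ! j) (snd h' ! j)}"
        using j len[OF gS] len[OF hS] kn g h by auto
    qed
    then show "toy_commute g' h'" using com gS hS unfolding toy_commute_def by simp
  next
    show "toy_minus_one k \<notin> SA"
    proof
      assume "toy_minus_one k \<in> SA"
      then obtain g where g: "g \<in> sub_A k n S" "toy_minus_one k = (fst g, take k (snd g))"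
        unfolding SA_def by blast
      have gS: "g \<in> S" using g sA by auto
      have "take k (snd g) = replicate k PI" "fst g = -1" using g(2) by (auto simp: toy_minus_one_def)
      moreover have "drop k (snd g) = replicate (n - k) PI"
        using dropA[OF g(1)] len[OF gS] by (simp add: replicate_eqI)
      ultimately have "snd g = replicate n PI" using kn
        by (metis append_take_drop_id replicate_add le_add_diff_inverse)
      then have "g = toy_minus_one n" using \<open>fst g = -1\<close>
        by (simp add: toy_minus_one_def prod_eq_iff)
      then show False using gS nm by simp
    qed
  qed
  have stB: "toy_stabilizer (n - k) SB"
    unfolding toy_stabilizer_def toy_subgroup_def
  proof (intro conjI ballI)
    show "SB \<subseteq> toyG (n - k)"
    proof
      fix x assume "x \<in> SB"
      then obtain g where "g \<in> S" "x = (fst g, drop k (snd g))" unfolding SB_def using sB by blast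
      then show "x \<in> toyG (n - k)" using len[of g] kn unfolding toyG_def by auto
    qed
    have "toy_one n \<in> sub_B k S" using one kn unfolding sub_B_def toy_one_def by auto
    then have "(fst (toy_one n), drop k (snd (toy_one n))) \<in> SB" unfolding SB_def by blast
    then show "toy_one (n - k) \<in> SB" using kn by (simp add: toy_one_def)
  next
    fix g' h' assume "g' \<in> SB" "h' \<in> SB"
    then obtain g h where g: "g \<in> sub_B k S" "g' = (fst g, drop k (snd g))"
      and h: "h \<in> sub_B k S" "h' = (fst h, drop k (snd h))" unfolding SB_def by blast
    have gS: "g \<in> S" and hS: "h \<in> S" using g h sB by auto
    have "toy_mult g h \<in> S" using cl gS hS by blast
    moreover have "\<forall>p\<in>set (take k (snd (toy_mult g h))). p = PI"
      using allPI_map2[OF takeB[OF g(1)] takeB[OF h(1)]] by (simp add: toy_mult_def take_map take_zip)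
    ultimately have "toy_mult g h \<in> sub_B k S" using sB_iff by blast
    then have "(fst (toy_mult g h), drop k (snd (toy_mult g h))) \<in> SB" unfolding SB_def by blast
    then show "toy_mult g' h' \<in> SB" using g h by (simp add: toy_mult_def drop_map drop_zip)
  next
    fix g' h' assume "g' \<in> SB" "h' \<in> SB"
    then obtain g h where g: "g \<in> sub_B k S" "g' = (fst g, drop k (snd g))"
      and h: "h \<in> sub_B k S" "h' = (fst h, drop k (snd h))" unfolding SB_def by blast
    have gS: "g \<in> S" and hS: "h \<in> S" using g h sB by auto
    have gP: "snd g ! j = PI" if "j < k" for j using g(1) that unfolding sub_B_def by auto
    let ?X = "{j. j < length (snd g') \<and> panticomm (snd g' ! j) (snd h' ! j)}"
    have eq: "{j. j < length (snd g) \<and> panticomm (snd g ! j) (snd h ! j)} = (\<lambda>j. j + k) ` ?X"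
    proof (intro equalityI subsetI)
      fix j assume j: "j \<in> {j. j < length (snd g) \<and> panticomm (snd g ! j) (snd h ! j)}"
      then have "\<not> j < k" using gP by (auto simp: panticomm_def)
      then have "j - k \<in> ?X" using j g h len[OF gS] len[OF hS] by auto
      moreover have "j = (j - k) + k" using \<open>\<not> j < k\<close> by simp
      ultimately show "j \<in> (\<lambda>j. j + k) ` ?X" by blast
    next
      fix j assume "j \<in> (\<lambda>j. j + k) ` ?X"
      then show "j \<in> {j. j < length (snd g) \<and> panticomm (snd g ! j) (snd h ! j)}"
        using g h len[OF gS] len[OF hS] kn by (auto simp: add.commute)
    qed
    have ceq: "card {j. j < length (snd g) \<and> panticomm (snd g ! j) (snd h ! j)} = card ?X"
      unfolding eq by (rule card_image) (simp add: inj_on_def)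
    have "even (card {j. j < length (snd g) \<and> panticomm (snd g ! j) (snd h ! j)})"
      using com gS hS unfolding toy_commute_def by blast
    then have "even (card ?X)" by (simp only: ceq)
    then show "toy_commute g' h'" unfolding toy_commute_def .
  next
    show "toy_minus_one (n - k) \<notin> SB"
    proof
      assume "toy_minus_one (n - k) \<in> SB"
      then obtain g where g: "g \<in> sub_B k S" "toy_minus_one (n - k) = (fst g, drop k (snd g))"
        unfolding SB_def by blast
      have gS: "g \<in> S" using g sB by auto
      have "drop k (snd g) = replicate (n - k) PI" "fst g = -1" using g(2) by (auto simp: toy_minus_one_def)
      moreover have "take k (snd g) = replicate k PI"
        using takeB[OF g(1)] len[OF gS] kn by (simp add: replicate_eqI)
      ultimately have "snd g = replicate n PI" using kn
        by (metis append_take_drop_id replicate_add le_add_diff_inverse)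
      then have "g = toy_minus_one n" using \<open>fst g = -1\<close>
        by (simp add: toy_minus_one_def prod_eq_iff)
      then show False using gS nm by simp
    qed
  qed
  have actgen: "toy_act g os = 1"
    if g: "g \<in> toy_gen n (sub_A k n S \<union> sub_B k S)" and os: "os \<in> ontic n"
       and gens: "\<forall>h\<in>sub_A k n S \<union> sub_B k S. toy_act h os = 1" for g os
    using g
  proof (induction rule: toy_gen.induct)
    case one
    then show ?case unfolding toy_act_def toy_one_def by (simp add: prod_PI)
  next
    case (step g h)
    have gS: "g \<in> S" using step.hyps(1) sA sB by blast
    have hS: "h \<in> S" using step.hyps(2) gen by auto
    have "toy_act (toy_mult g h) os = toy_act g os * toy_act h os"
      unfolding toy_act_def toy_mult_def using os len[OF gS] len[OF hS]
      by (simp add: prod_mult ontic_def)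
    then show ?case using step gens by simp
  qed
  have actA: "toy_act g (a @ b) = toy_act (fst g, take k (snd g)) a"
    if g: "g \<in> sub_A k n S" and la: "length a = k" and lb: "length b = n - k" for g a b
  proof -
    have gS: "g \<in> S" using g sA by blast
    have "length (snd g) = length a + length b" using len[OF gS] la lb kn by simp
    then show ?thesis unfolding toy_act_def
      using prod_split[of "snd g" a b] prod_PI[OF dropA[OF g]] la by simp
  qed
  have actB: "toy_act g (a @ b) = toy_act (fst g, drop k (snd g)) b"
    if g: "g \<in> sub_B k S" and la: "length a = k" and lb: "length b = n - k" for g a b
  proof -
    have gS: "g \<in> S" using g sB by blast
    have "length (snd g) = length a + length b" using len[OF gS] la lb kn by simp
    then show ?thesis unfolding toy_act_def
      using prod_split[of "snd g" a b] prod_PI[OF takeB[OF g]] la by simp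
  qed
  have E: "epistemic n S = {a @ b | a b. a \<in> epistemic k SA \<and> b \<in> epistemic (n - k) SB}"
  proof (intro equalityI subsetI)
    fix os assume os: "os \<in> epistemic n S"
    then have on: "os \<in> ontic n" and acts: "\<forall>g\<in>S. toy_act g os = 1"
      unfolding epistemic_def by auto
    define a where "a = take k os"
    define b where "b = drop k os"
    have lo: "length os = n" and lt: "\<forall>i\<in>set os. i < 4" using on unfolding ontic_def by auto
    have ab: "os = a @ b" unfolding a_def b_def by simp
    have la: "length a = k" and lb: "length b = n - k" using lo kn unfolding a_def b_def by auto
    have "a \<in> ontic k" "b \<in> ontic (n - k)" using la lb lt unfolding ontic_def a_def b_def
      by (auto dest: in_set_takeD in_set_dropD)
    moreover have "\<forall>g'\<in>SA. toy_act g' a = 1"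
    proof
      fix g' assume "g' \<in> SA"
      then obtain g where g: "g \<in> sub_A k n S" "g' = (fst g, take k (snd g))" unfolding SA_def by blast
      have "toy_act g os = 1" using acts sA[OF g(1)] by blast
      then show "toy_act g' a = 1" using actA[OF g(1) la lb] ab g(2) by simp
    qed
    moreover have "\<forall>g'\<in>SB. toy_act g' b = 1"
    proof
      fix g' assume "g' \<in> SB"
      then obtain g where g: "g \<in> sub_B k S" "g' = (fst g, drop k (snd g))" unfolding SB_def by blast
      have "toy_act g os = 1" using acts sB[OF g(1)] by blast
      then show "toy_act g' b = 1" using actB[OF g(1) la lb] ab g(2) by simp
    qed
    ultimately have "a \<in> epistemic k SA" "b \<in> epistemic (n - k) SB"
      unfolding epistemic_def by auto
    then show "os \<in> {a @ b | a b. a \<in> epistemic k SA \<and> b \<in> epistemic (n - k) SB}"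
      using ab by blast
  next
    fix os assume "os \<in> {a @ b | a b. a \<in> epistemic k SA \<and> b \<in> epistemic (n - k) SB}"
    then obtain a b where ab: "os = a @ b" and a: "a \<in> epistemic k SA" and b: "b \<in> epistemic (n - k) SB"
      by blast
    have la: "length a = k" and lb: "length b = n - k" using a b unfolding epistemic_def ontic_def by auto
    have on: "os \<in> ontic n" using a b ab kn unfolding epistemic_def ontic_def by auto
    have gens: "\<forall>h\<in>sub_A k n S \<union> sub_B k S. toy_act h os = 1"
    proof
      fix h assume "h \<in> sub_A k n S \<union> sub_B k S"
      then show "toy_act h os = 1"
      proof
        assume h: "h \<in> sub_A k n S"
        then have "(fst h, take k (snd h)) \<in> SA" unfolding SA_def by blast
        then show ?thesis using a actA[OF h la lb] ab unfolding epistemic_def by simp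
      next
        assume h: "h \<in> sub_B k S"
        then have "(fst h, drop k (snd h)) \<in> SB" unfolding SB_def by blast
        then show ?thesis using b actB[OF h la lb] ab unfolding epistemic_def by simp
      qed
    qed
    have "\<forall>g\<in>S. toy_act g os = 1"
    proof
      fix g assume "g \<in> S"
      then have "g \<in> toy_gen n (sub_A k n S \<union> sub_B k S)" using gen by simp
      then show "toy_act g os = 1" using actgen on gens by blast
    qed
    then show "os \<in> epistemic n S" using on unfolding epistemic_def by simp
  qed
  have "product_state k n (epistemic n S)"
    unfolding product_state_def valid_epistemic_def using stA stB E by blast
  then have "mixture_of_products k n (epistemic n S)"
    unfolding mixture_of_products_def by (intro exI[of _ "{epistemic n S}"]) auto
  then show ?thesis unfolding entangled_def by simp
qed

end
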